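(* Let $s\in(0,1)$ and $0<k<2s$. Then there is a constant $C>0$, independent of $x$, such that $$-(-\Delta)^s\langle x\rangle^k\le C\,\langle x\rangle^{k-2s}\Big(1+\frac{1}{2s}+\frac{1}{2s-k}\Big)\quad\text{for all }x\in\mathbb{R}^d.$$
   Context: $\langle x\rangle=(1+|x|^2)^{1/2}$. The fractional Laplacian is $-(-\Delta)^su(x)=C_{d,s}\,\mathrm{p.v.}\int_{\mathbb{R}^d}\frac{u(y)-u(x)}{|x-y|^{d+2s}}\,dy$ with $C_{d,s}=\frac{2^{2s}\Gamma(d/2+s)}{\pi^{d/2}|\Gamma(-s)|}$. *)

theory Defs
  imports "HOL-Analysis.Analysis"
begin

definition jbracket :: "'a::euclidean_space \<Rightarrow> real" where
  "jbracket x = sqrt (1 + (norm x)^2)"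

definition frac_const :: "nat \<Rightarrow> real \<Rightarrow> real" where
  "frac_const d s = 2 powr (2 * s) * Gamma (real d / 2 + s) / (pi powr (real d / 2) * abs (Gamma (-s)))"

definition frac_trunc :: "real \<Rightarrow> ('a::euclidean_space \<Rightarrow> real) \<Rightarrow> 'a \<Rightarrow> real \<Rightarrow> real" where
  "frac_trunc s u x eps =
     (LINT y:{y. eps < dist x y}|lborel. (u y - u x) / dist x y powr (real DIM('a) + 2 * s))"

text \<open>The minus fractional Laplacian  - (-Delta)^s u (x) = C_{d,s} p.v. integral,
  the principal value being the limit of the truncated integrals as eps tends to 0+.\<close>
definition neg_frac_laplacian :: "real \<Rightarrow> ('a::euclidean_space \<Rightarrow> real) \<Rightarrow> 'a \<Rightarrow> real" where
  "neg_frac_laplacian s u x =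
     frac_const DIM('a) s * Lim (at_right 0) (frac_trunc s u x)"

end

theory Submission
  imports Defs
begin


lemma shell_pt:
  fixes q a t :: real
  assumes "a > 0" "a < t" "t \<le> 2*a"
  shows "t powr (-q) \<le> 2 powr \<bar>q\<bar> * a powr (-q)"
proof -
  have "t powr (-q) = a powr (-q) * (t/a) powr (-q)"
    using assms by (simp add: powr_divide)
  moreover have "(t/a) powr (-q) \<le> 2 powr \<bar>q\<bar>"
  proof (cases "q \<ge> 0")
    case True
    have "(t/a) powr (-q) \<le> 1 powr (-q)" using assms True
      by (intro powr_mono2') (auto simp: field_simps)
    then have "(t/a) powr (-q) \<le> 1" by simp
    also have "1 \<le> 2 powr \<bar>q\<bar>" by (simp add: ge_one_powr_ge_zero)
    finally show ?thesis .
  next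
    case False
    have "(t/a) powr (-q) \<le> 2 powr (-q)" using assms False
      by (intro powr_mono2) (auto simp: field_simps)
    then show ?thesis using False by simp
  qed
  ultimately show ?thesis using assms
    by (simp add: mult_left_mono mult.commute)
qed

lemma shell_nn:
  fixes q a :: real
  assumes "a > 0"
  shows "(\<integral>\<^sup>+z. ennreal (indicator {z::'a::euclidean_space. a < norm z \<and> norm z \<le> 2*a} z * norm z powr (-q)) \<partial>lborel)
    \<le> ennreal (2 powr \<bar>q\<bar> * unit_ball_vol DIM('a) * 2^DIM('a) * a powr (real DIM('a) - q))"
proof -
  let ?c = "2 powr \<bar>q\<bar> * a powr (-q)"
  have "(\<integral>\<^sup>+z. ennreal (indicator {z::'a. a < norm z \<and> norm z \<le> 2*a} z * norm z powr (-q)) \<partial>lborel)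
     \<le> (\<integral>\<^sup>+z. ennreal ?c * indicator (cball (0::'a) (2*a)) z \<partial>lborel)"
  proof (rule nn_integral_mono)
    fix z :: 'a
    show "ennreal (indicator {z::'a. a < norm z \<and> norm z \<le> 2*a} z * norm z powr (-q)) \<le> ennreal ?c * indicator (cball (0::'a) (2*a)) z"
    proof (cases "a < norm z \<and> norm z \<le> 2*a")
      case True
      then show ?thesis using assms shell_pt[of a "norm z" q]
        by (auto simp: indicator_def intro!: ennreal_leI)
    qed (simp add: indicator_def)
  qed
  also have "\<dots> = ennreal ?c * emeasure lborel (cball (0::'a) (2*a))"
    by (rule nn_integral_cmult_indicator) auto
  also have "\<dots> = ennreal (?c * (unit_ball_vol DIM('a) * (2*a)^DIM('a)))"
    using assms by (simp add: emeasure_cball ennreal_mult)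
  also have "?c * (unit_ball_vol DIM('a) * (2*a)^DIM('a)) = 2 powr \<bar>q\<bar> * unit_ball_vol DIM('a) * 2^DIM('a) * (a powr (-q) * a powr DIM('a))"
    using assms by (simp add: power_mult_distrib powr_realpow)
  also have "a powr (-q) * a powr DIM('a) = a powr (real DIM('a) - q)"
    by (simp add: powr_add[symmetric])
  finally show ?thesis .
qed

lemma region_nn:
  fixes a :: "nat \<Rightarrow> real" and R :: "'a::euclidean_space set" and q :: real
  assumes apos: "\<And>n. a n > 0" and cover: "\<And>z. z \<in> R \<Longrightarrow> \<exists>n. a n < norm z \<and> norm z \<le> 2 * a n"
    and summ: "summable (\<lambda>n. a n powr (real DIM('a) - q))"
  shows "(\<integral>\<^sup>+z. ennreal (indicator R z * norm z powr (-q)) \<partial>lborel)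
    \<le> ennreal (2 powr \<bar>q\<bar> * unit_ball_vol DIM('a) * 2^DIM('a) * (\<Sum>n. a n powr (real DIM('a) - q)))"
proof -
  define S where "S n = {z::'a. a n < norm z \<and> norm z \<le> 2 * a n}" for n
  let ?K = "2 powr \<bar>q\<bar> * unit_ball_vol DIM('a) * 2^DIM('a)"
  have "(\<integral>\<^sup>+z. ennreal (indicator R z * norm z powr (-q)) \<partial>lborel)
     \<le> (\<integral>\<^sup>+z. (\<Sum>n. ennreal (indicator (S n) z * norm z powr (-q))) \<partial>lborel)"
  proof (intro nn_integral_mono)
    fix z :: 'a
    show "ennreal (indicator R z * norm z powr (-q)) \<le> (\<Sum>n. ennreal (indicator (S n) z * norm z powr (-q)))"
    proof (cases "z \<in> R")
      case True
      then obtain n where n: "a n < norm z \<and> norm z \<le> 2 * a n" using cover by blast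
      have "ennreal (indicator R z * norm z powr (-q)) = (\<Sum>i\<in>{n}. ennreal (indicator (S i) z * norm z powr (-q)))"
        using True n by (simp add: S_def indicator_def)
      also have "\<dots> \<le> (\<Sum>i. ennreal (indicator (S i) z * norm z powr (-q)))"
        by (intro sum_le_suminf) auto
      finally show ?thesis .
    qed simp
  qed
  also have "\<dots> = (\<Sum>n. (\<integral>\<^sup>+z. ennreal (indicator (S n) z * norm z powr (-q)) \<partial>lborel))"
    by (intro nn_integral_suminf) (auto simp: S_def)
  also have "\<dots> \<le> (\<Sum>n. ennreal (?K * a n powr (real DIM('a) - q)))"
    using shell_nn[OF apos, where q=q] by (intro suminf_le) (auto simp: S_def)
  also have "\<dots> = ennreal (\<Sum>n. ?K * a n powr (real DIM('a) - q))"
    by (intro suminf_ennreal2 summable_mult summ) auto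
  also have "(\<Sum>n. ?K * a n powr (real DIM('a) - q)) = ?K * (\<Sum>n. a n powr (real DIM('a) - q))"
    by (intro suminf_mult summ)
  finally show ?thesis .
qed

lemma nn_to_int:
  fixes f :: "'a::euclidean_space \<Rightarrow> real"
  assumes [measurable]: "f \<in> borel_measurable lborel" and nn: "\<And>z. f z \<ge> 0"
    and B: "B \<ge> 0" and bd: "(\<integral>\<^sup>+z. ennreal (f z) \<partial>lborel) \<le> ennreal B"
  shows "integrable lborel f" "integral\<^sup>L lborel f \<le> B"
proof -
  show int: "integrable lborel f"
  proof (rule integrableI_bounded)
    have "(\<integral>\<^sup>+z. ennreal (norm (f z)) \<partial>lborel) = (\<integral>\<^sup>+z. ennreal (f z) \<partial>lborel)"
      using nn by simp
    also have "\<dots> < \<infinity>" using bd by (simp add: le_less_trans)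
    finally show "(\<integral>\<^sup>+z. ennreal (norm (f z)) \<partial>lborel) < \<infinity>" .
  qed simp
  have "ennreal (integral\<^sup>L lborel f) = (\<integral>\<^sup>+z. ennreal (f z) \<partial>lborel)"
    using nn_integral_eq_integral[OF int] nn by simp
  then have "ennreal (integral\<^sup>L lborel f) \<le> ennreal B" using bd by simp
  then show "integral\<^sup>L lborel f \<le> B" using B by (simp add: ennreal_le_iff)
qed

lemma ex_dyadic_near:
  fixes t r :: real assumes "0 < t" "t \<le> r"
  shows "\<exists>n. r / 2 ^ Suc n < t \<and> t \<le> r / 2 ^ n"
proof -
  obtain m where m: "r / t < 2 ^ m" using real_arch_pow[of 2 "r/t"] by auto
  then have ex: "r / 2 ^ m < t" using assms by (simp add: field_simps)
  define M where "M = (LEAST m. r / 2 ^ m < t)"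
  have M: "r / 2 ^ M < t" unfolding M_def by (rule LeastI[of "\<lambda>m. r / 2 ^ m < t" m]) (rule ex)
  have "M \<noteq> 0" using M assms by (cases "M = 0") auto
  then obtain n where n: "M = Suc n" by (cases M) auto
  have "\<not> r / 2 ^ n < t" using not_less_Least[of n "\<lambda>m. r / 2 ^ m < t"] n M_def by auto
  then show ?thesis using M n by auto
qed

lemma ex_dyadic_far:
  fixes t r :: real assumes "0 < r" "r < t"
  shows "\<exists>n. r * 2 ^ n < t \<and> t \<le> 2 * (r * 2 ^ n)"
proof -
  obtain m where m: "t / r < 2 ^ m" using real_arch_pow[of 2 "t/r"] by auto
  then have ex: "t \<le> r * 2 ^ m" using assms by (simp add: field_simps)
  define M where "M = (LEAST m. t \<le> r * 2 ^ m)"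
  have M: "t \<le> r * 2 ^ M" unfolding M_def by (rule LeastI[of "\<lambda>m. t \<le> r * 2 ^ m" m]) (rule ex)
  have "M \<noteq> 0" using M assms by (cases "M = 0") auto
  then obtain n where n: "M = Suc n" by (cases M) auto
  have "\<not> t \<le> r * 2 ^ n" using not_less_Least[of n "\<lambda>m. t \<le> r * 2 ^ m"] n M_def by auto
  then show ?thesis using M n by (intro exI[of _ n]) (auto simp: mult_ac)
qed

lemma powr_pow_swap: "x > 0 \<Longrightarrow> (x ^ m) powr e = (x powr e) ^ m" for x e :: real
  by (simp add: powr_realpow[symmetric] powr_powr mult.commute)

definition near_const :: "nat \<Rightarrow> real \<Rightarrow> real" where
  "near_const d q = 2 powr \<bar>q\<bar> * unit_ball_vol d * 2^d * (\<Sum>n. ((1/2) powr (real d - q)) ^ Suc n)"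

definition far_const :: "nat \<Rightarrow> real \<Rightarrow> real" where
  "far_const d q = 2 powr \<bar>q\<bar> * unit_ball_vol d * 2^d * (\<Sum>n. (2 powr (real d - q)) ^ n)"

lemma near_nn:
  fixes q r :: real
  assumes q: "q < real DIM('a)" and r: "r > 0"
  shows "(\<integral>\<^sup>+z. ennreal (indicator {z::'a::euclidean_space. 0 < norm z \<and> norm z \<le> r} z * norm z powr (-q)) \<partial>lborel)
    \<le> ennreal (near_const DIM('a) q * r powr (real DIM('a) - q))"
proof -
  define e where "e = real DIM('a) - q"
  have e: "e > 0" using q by (simp add: e_def)
  define a where "a n = r * (1/2) ^ Suc n" for n
  have apos: "a n > 0" for n using r by (simp add: a_def)
  have aeq: "a n powr e = r powr e * ((1/2) powr e) ^ Suc n" for n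
  proof -
    have "a n powr e = r powr e * ((1/2)^Suc n) powr e" unfolding a_def by (rule powr_mult)
    moreover have "((1/2::real)^Suc n) powr e = ((1/2) powr e)^Suc n" by (rule powr_pow_swap) simp
    ultimately show ?thesis by simp
  qed
  have rho: "(1/2::real) powr e < 1 powr e" using e by (intro powr_less_mono2) auto
  then have rho: "(1/2::real) powr e < 1" by simp
  have sg: "summable (\<lambda>n. ((1/2::real) powr e) ^ Suc n)"
    using rho by (simp only: power_Suc) (rule summable_mult, rule summable_geometric, simp)
  have summ: "summable (\<lambda>n. a n powr e)" unfolding aeq by (intro summable_mult sg)
  have cover: "\<exists>n. a n < norm z \<and> norm z \<le> 2 * a n" if "z \<in> {z::'a. 0 < norm z \<and> norm z \<le> r}" for z
  proof -
    from that obtain n where "r / 2 ^ Suc n < norm z \<and> norm z \<le> r / 2 ^ n"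
      using ex_dyadic_near[of "norm z" r] by auto
    then show ?thesis by (intro exI[of _ n]) (simp add: a_def field_simps)
  qed
  have "(\<integral>\<^sup>+z. ennreal (indicator {z::'a::euclidean_space. 0 < norm z \<and> norm z \<le> r} z * norm z powr (-q)) \<partial>lborel)
    \<le> ennreal (2 powr \<bar>q\<bar> * unit_ball_vol DIM('a) * 2^DIM('a) * (\<Sum>n. a n powr e))"
    using region_nn[where R="{z::'a. 0 < norm z \<and> norm z \<le> r}" and q=q, OF apos cover] summ by (simp add: e_def)
  also have "(\<Sum>n. a n powr e) = r powr e * (\<Sum>n. ((1/2) powr e) ^ Suc n)"
    unfolding aeq by (intro suminf_mult sg)
  finally show ?thesis by (simp add: near_const_def e_def mult_ac)
qed

lemma far_nn:
  fixes q r :: real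
  assumes q: "q > real DIM('a)" and r: "r > 0"
  shows "(\<integral>\<^sup>+z. ennreal (indicator {z::'a::euclidean_space. r < norm z} z * norm z powr (-q)) \<partial>lborel)
    \<le> ennreal (far_const DIM('a) q * r powr (real DIM('a) - q))"
proof -
  define e where "e = real DIM('a) - q"
  have e: "e < 0" using q by (simp add: e_def)
  define a where "a n = r * 2 ^ n" for n
  have apos: "a n > 0" for n using r by (simp add: a_def)
  have aeq: "a n powr e = r powr e * (2 powr e) ^ n" for n
    using r by (simp add: a_def powr_mult powr_pow_swap)
  have rho: "(2::real) powr e < 1" using e by (simp add: powr_less_one)
  have sg: "summable (\<lambda>n. ((2::real) powr e) ^ n)"
    using rho by (intro summable_geometric) auto
  have summ: "summable (\<lambda>n. a n powr e)" unfolding aeq by (intro summable_mult sg)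
  have cover: "\<exists>n. a n < norm z \<and> norm z \<le> 2 * a n" if "z \<in> {z::'a. r < norm z}" for z
    using that ex_dyadic_far[of r "norm z"] r by (auto simp: a_def)
  have "(\<integral>\<^sup>+z. ennreal (indicator {z::'a::euclidean_space. r < norm z} z * norm z powr (-q)) \<partial>lborel)
    \<le> ennreal (2 powr \<bar>q\<bar> * unit_ball_vol DIM('a) * 2^DIM('a) * (\<Sum>n. a n powr e))"
    using region_nn[where R="{z::'a. r < norm z}" and q=q, OF apos cover] summ by (simp add: e_def)
  also have "(\<Sum>n. a n powr e) = r powr e * (\<Sum>n. (2 powr e) ^ n)"
    unfolding aeq by (intro suminf_mult sg)
  finally show ?thesis by (simp add: far_const_def e_def mult_ac)
qed

lemma near_const_nonneg: assumes "q < real d" shows "near_const d q \<ge> 0"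
proof -
  have rho: "(1/2::real) powr (real d - q) < 1 powr (real d - q)" using assms by (intro powr_less_mono2) auto
  then have rho: "(1/2::real) powr (real d - q) < 1" by simp
  have sg: "summable (\<lambda>n. ((1/2::real) powr (real d - q)) ^ Suc n)"
    using rho by (simp only: power_Suc) (rule summable_mult, rule summable_geometric, simp)
  show ?thesis unfolding near_const_def
    by (intro mult_nonneg_nonneg suminf_nonneg sg) auto
qed

lemma far_const_nonneg: "q > real d \<Longrightarrow> far_const d q \<ge> 0"
  unfolding far_const_def
  by (intro mult_nonneg_nonneg suminf_nonneg summable_geometric)
     (auto simp: powr_less_one)



lemma taylor_g:
  fixes k m A B :: real
  assumes k: "0 < k" "k < 2" and m: "m > 0" "m \<le> 1 + A" "m \<le> 1 + B"
  shows "\<bar>(1+B) powr (k/2) - (1+A) powr (k/2) - (k/2) * (1+A) powr (k/2-1) * (B-A)\<bar> \<le> m powr (k/2-2) * (B-A)^2"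
proof (cases "B = A")
  case True then show ?thesis by simp
next
  case False
  define diff where "diff m t = (\<Prod>j<m. (k/2 - real j)) * (1+t) powr (k/2 - real m)" for m :: nat and t :: real
  define a where "a = min A B"
  define b where "b = max A B"
  have D: "\<forall>n t. n < 2 \<and> a \<le> t \<and> t \<le> b \<longrightarrow> DERIV (diff n) t :> diff (Suc n) t"
  proof (intro allI impI)
    fix n :: nat and t :: real
    assume h: "n < 2 \<and> a \<le> t \<and> t \<le> b"
    then have tp: "1 + t > 0" using m by (auto simp: a_def)
    have "DERIV (\<lambda>t. (1+t) powr (k/2 - real n)) t :> (k/2 - real n) * (1+t) powr (k/2 - real n - 1)"
      using tp by (auto intro!: derivative_eq_intros)
    then have "DERIV (\<lambda>t. (\<Prod>j<n. (k/2 - real j)) * (1+t) powr (k/2 - real n)) t :>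
        (\<Prod>j<n. (k/2 - real j)) * ((k/2 - real n) * (1+t) powr (k/2 - real n - 1))"
      by (rule DERIV_cmult)
    then show "DERIV (diff n) t :> diff (Suc n) t"
      unfolding diff_def[abs_def] by (simp add: algebra_simps diff_diff_eq)
  qed
  have d0: "diff 0 = (\<lambda>t. (1+t) powr (k/2))" by (simp add: diff_def[abs_def])
  obtain t where t: "(if B < A then B < t \<and> t < A else A < t \<and> t < B)"
    and eq: "(\<lambda>t. (1+t) powr (k/2)) B = (\<Sum>n<2. (diff n A / fact n) * (B - A)^n) + (diff 2 t / fact 2) * (B - A)^2"
    using Taylor[of 2 diff "\<lambda>t. (1+t) powr (k/2)" a b A B, OF _ d0 D] False
    by (auto simp: a_def b_def)
  have tm: "m \<le> 1 + t" using t m by (auto split: if_splits)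
  have eq2: "(1+B) powr (k/2) - (1+A) powr (k/2) - (k/2) * (1+A) powr (k/2-1) * (B-A)
      = (k/2) * (k/2 - 1) / 2 * (1+t) powr (k/2 - 2) * (B-A)^2"
    using eq by (simp add: diff_def numeral_2_eq_2 lessThan_Suc field_simps)
  have c: "\<bar>(k/2) * (k/2 - 1) / 2\<bar> \<le> 1" using k by (auto simp: abs_if field_simps) (smt (verit) mult_nonneg_nonneg)
  have p: "(1+t) powr (k/2 - 2) \<le> m powr (k/2-2)" using tm m k by (intro powr_mono2') auto
  have "\<bar>(k/2) * (k/2 - 1) / 2 * (1+t) powr (k/2 - 2) * (B-A)^2\<bar> = \<bar>(k/2) * (k/2 - 1) / 2\<bar> * (1+t) powr (k/2 - 2) * (B-A)^2"
    by (simp add: abs_mult)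
  also have "\<dots> \<le> 1 * m powr (k/2-2) * (B-A)^2"
    using c p by (intro mult_right_mono mult_mono) auto
  finally show ?thesis unfolding eq2 by simp
qed



lemma jb_sq: "(jbracket x)^2 = 1 + (norm x)^2"
  by (simp add: jbracket_def)
lemma jb_ge1: "jbracket x \<ge> 1"
  by (simp add: jbracket_def)
lemma jb_pos: "jbracket x > 0"
  using jb_ge1[of x] by simp
lemma norm_le_jb: "norm x \<le> jbracket x"
  unfolding jbracket_def by (rule real_le_rsqrt) simp
lemma jb_tri: "jbracket (x + z) \<le> jbracket x + norm z"
proof -
  have a: "(norm (x+z))^2 \<le> (norm x + norm z)^2"
    using norm_triangle_ineq[of x z] by (intro power_mono) auto
  have b: "norm x * norm z \<le> jbracket x * norm z"
    using norm_le_jb[of x] by (intro mult_right_mono) auto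
  have c: "(jbracket x + norm z)^2 = (jbracket x)^2 + 2 * (jbracket x * norm z) + (norm z)^2"
    by (simp add: power2_sum)
  have d: "(norm x + norm z)^2 = (norm x)^2 + 2 * (norm x * norm z) + (norm z)^2"
    by (simp add: power2_sum)
  have e: "(jbracket (x+z))^2 \<le> (jbracket x + norm z)^2"
    using a b c d jb_sq[of x] jb_sq[of "x+z"] by linarith
  have f: "0 \<le> jbracket x + norm z" using jb_pos[of x] norm_ge_zero[of z] by linarith
  show ?thesis by (rule power2_le_imp_le[OF e f])
qed
lemma jb_lower: "jbracket x - norm z \<le> jbracket (x + z)"
  using jb_tri[of "x+z" "-z"] by simp
lemma u_eq: "jbracket y powr k = (1 + (norm y)^2) powr (k/2)"
proof -
  have "jbracket y = (1 + (norm y)^2) powr (1/2)" unfolding jbracket_def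
    by (rule powr_half_sqrt[symmetric]) simp
  then show ?thesis by (simp add: powr_powr)
qed
lemma D_near:
  fixes x z :: "'a::euclidean_space" and k :: real
  assumes k: "0 < k" "k < 2" and z: "norm z \<le> jbracket x / 2"
  shows "\<bar>jbracket (x+z) powr k + jbracket (x-z) powr k - 2 * jbracket x powr k\<bar>
          \<le> 300 * jbracket x powr (k-2) * (norm z)^2"
proof -
  define L where "L = jbracket x"
  have L1: "L \<ge> 1" using jb_ge1 by (simp add: L_def)
  define A where "A = (norm x)^2"
  define B1 where "B1 = (norm (x+z))^2"
  define B2 where "B2 = (norm (x-z))^2"
  define m where "m = L^2/4"
  have LA: "1 + A = L^2" by (simp add: L_def A_def jb_sq)
  have nx: "norm x \<le> L" using norm_le_jb by (simp add: L_def)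
  have m0: "m > 0" using L1 by (simp add: m_def)
  have mA: "m \<le> 1 + A" using LA m0 by (simp add: m_def)
  have low: "L/2 \<le> jbracket (x + w)" if "norm w \<le> L/2" for w
    using jb_lower[of x w] that by (simp add: L_def)
  have mB1: "m \<le> 1 + B1"
  proof -
    have "(L/2)^2 \<le> (jbracket (x+z))^2" using low[of z] z L1 by (intro power_mono) (auto simp: L_def)
    then show ?thesis by (simp add: m_def B1_def jb_sq power_divide)
  qed
  have mB2: "m \<le> 1 + B2"
  proof -
    have "(L/2)^2 \<le> (jbracket (x+(-z)))^2" using low[of "-z"] z L1 by (intro power_mono) (auto simp: L_def)
    then show ?thesis by (simp add: m_def B2_def jb_sq power_divide)
  qed
  have R1: "\<bar>(1+B1) powr (k/2) - (1+A) powr (k/2) - (k/2) * (1+A) powr (k/2-1) * (B1-A)\<bar> \<le> m powr (k/2-2) * (B1-A)^2"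
    by (rule taylor_g[OF k m0 mA mB1])
  have R2: "\<bar>(1+B2) powr (k/2) - (1+A) powr (k/2) - (k/2) * (1+A) powr (k/2-1) * (B2-A)\<bar> \<le> m powr (k/2-2) * (B2-A)^2"
    by (rule taylor_g[OF k m0 mA mB2])
  have sumB: "B1 + B2 - 2*A = 2 * (norm z)^2"
    unfolding B1_def B2_def A_def
    by (simp add: power2_norm_eq_inner inner_add_left inner_add_right inner_diff_left inner_diff_right inner_commute)
  have dB1: "\<bar>B1 - A\<bar> \<le> 3 * L * norm z"
  proof -
    have "B1 - A = 2 * (x \<bullet> z) + (norm z)^2" unfolding B1_def A_def
      by (simp add: power2_norm_eq_inner inner_add_left inner_add_right inner_commute)
    moreover have "\<bar>x \<bullet> z\<bar> \<le> L * norm z" using Cauchy_Schwarz_ineq2[of x z] nx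
      by (meson mult_right_mono norm_ge_zero order_trans)
    moreover have "(norm z)^2 \<le> L * norm z" using z L1 by (simp add: power2_eq_square mult_right_mono L_def)
    ultimately show ?thesis using zero_le_power2[of "norm z"] by linarith
  qed
  have dB2: "\<bar>B2 - A\<bar> \<le> 3 * L * norm z"
  proof -
    have "B2 - A = - 2 * (x \<bullet> z) + (norm z)^2" unfolding B2_def A_def
      by (simp add: power2_norm_eq_inner inner_diff_left inner_diff_right inner_commute)
    moreover have "\<bar>x \<bullet> z\<bar> \<le> L * norm z" using Cauchy_Schwarz_ineq2[of x z] nx
      by (meson mult_right_mono norm_ge_zero order_trans)
    moreover have "(norm z)^2 \<le> L * norm z" using z L1 by (simp add: power2_eq_square mult_right_mono L_def)
    ultimately show ?thesis using zero_le_power2[of "norm z"] by linarith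
  qed
  define P where "P = L powr (k-2)"
  have P0: "P \<ge> 0" by (simp add: P_def)
  have Lp: "(L^2) powr e = L powr (2*e)" for e
  proof -
    have "(L^2) powr e = (L powr 2) powr e" using L1 by (simp add: powr_numeral)
    also have "\<dots> = L powr (2*e)" by (rule powr_powr)
    finally show ?thesis .
  qed
  have mpow: "m powr (k/2-2) \<le> 16 * L powr (k-4)"
  proof -
    have "m powr (k/2-2) = (L^2) powr (k/2-2) * (1/4) powr (k/2-2)"
      unfolding m_def by (simp add: powr_mult[symmetric])
    also have "(L^2) powr (k/2-2) = L powr (k-4)"
      unfolding Lp by (simp add: algebra_simps)
    finally have eq: "m powr (k/2-2) = L powr (k-4) * (1/4) powr (k/2-2)" .
    have "(1/4::real) powr (k/2-2) \<le> (1/4) powr (-2)"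
      using k by (intro powr_mono') auto
    also have "(1/4::real) powr (-2) = inverse ((1/4) powr 2)" by (rule powr_minus)
    also have "(1/4::real) powr 2 = 1/16" by (simp add: powr_numeral power2_eq_square)
    finally have "(1/4::real) powr (k/2-2) \<le> 16" by simp
    then have "L powr (k-4) * (1/4) powr (k/2-2) \<le> L powr (k-4) * 16"
      by (intro mult_left_mono) auto
    then show ?thesis unfolding eq by (simp add: mult.commute)
  qed
  have key: "L powr (k-4) * (3 * L * norm z)^2 = 9 * P * (norm z)^2"
  proof -
    have l2: "L^2 = L powr 2" using L1 by (simp add: powr_numeral)
    have "L powr (k-4) * L^2 = L powr (k-4+2)" unfolding l2 by (rule powr_add[symmetric])
    then have "L powr (k-4) * L^2 = P" by (simp add: P_def)
    then show ?thesis by (simp add: power_mult_distrib algebra_simps)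
  qed
  have Rb: "m powr (k/2-2) * (Bi-A)^2 \<le> 144 * P * (norm z)^2" if "\<bar>Bi - A\<bar> \<le> 3 * L * norm z" for Bi
  proof -
    have "(Bi-A)^2 \<le> (3 * L * norm z)^2" using that
      by (metis abs_ge_zero power2_abs power_mono)
    then have "m powr (k/2-2) * (Bi-A)^2 \<le> 16 * L powr (k-4) * (3 * L * norm z)^2"
      using mpow by (intro mult_mono) auto
    also have "\<dots> = 144 * P * (norm z)^2" using key by simp
    finally show ?thesis .
  qed
  have g1: "(1+A) powr (k/2-1) = P"
    unfolding LA P_def Lp by (simp add: algebra_simps)
  have ux: "jbracket y powr k = (1 + (norm y)^2) powr (k/2)" for y :: 'a by (rule u_eq)
  have e1: "jbracket (x+z) powr k = (1+B1) powr (k/2)" unfolding B1_def by (rule ux)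
  have e2: "jbracket (x-z) powr k = (1+B2) powr (k/2)" unfolding B2_def by (rule ux)
  have e0: "jbracket x powr k = (1+A) powr (k/2)" unfolding A_def by (rule ux)
  define c where "c = (k/2) * (1+A) powr (k/2-1)"
  define X1 where "X1 = (1+B1) powr (k/2)"
  define X2 where "X2 = (1+B2) powr (k/2)"
  define X0 where "X0 = (1+A) powr (k/2)"
  have alg: "X1 + X2 - 2 * X0 = (X1 - X0 - c * (B1-A)) + (X2 - X0 - c * (B2-A)) + c * (B1 + B2 - 2*A)"
    by algebra
  have cB: "c * (B1 + B2 - 2*A) = k * P * (norm z)^2"
    unfolding sumB g1 c_def by simp
  have r1: "\<bar>X1 - X0 - c * (B1-A)\<bar> \<le> 144 * P * (norm z)^2"
    using R1 Rb[OF dB1] unfolding X1_def X0_def c_def by linarith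
  have r2: "\<bar>X2 - X0 - c * (B2-A)\<bar> \<le> 144 * P * (norm z)^2"
    using R2 Rb[OF dB2] unfolding X2_def X0_def c_def by linarith
  have r3: "\<bar>k * P * (norm z)^2\<bar> \<le> 2 * P * (norm z)^2"
    using k P0 by (simp add: abs_mult mult_right_mono)
  have nz: "0 \<le> P * (norm z)^2" using P0 by simp
  have "\<bar>X1 + X2 - 2 * X0\<bar> \<le> 300 * (P * (norm z)^2)"
    unfolding alg cB using r1 r2 r3 nz by (simp only: mult.assoc)
  then show ?thesis unfolding e1 e2 e0 X1_def[symmetric] X2_def[symmetric] X0_def[symmetric] P_def L_def
    by (simp add: mult.assoc)
qed

lemma u_le: "k \<ge> 0 \<Longrightarrow> M \<ge> jbracket x + norm z \<Longrightarrow> jbracket (x+z) powr k \<le> M powr k"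
  using jb_tri[of x z] jb_pos[of "x+z"] by (intro powr_mono2) auto

lemma D_far:
  fixes x z :: "'a::euclidean_space" and k :: real
  assumes k: "0 < k" and z: "jbracket x / 2 \<le> norm z"
  shows "\<bar>jbracket (x+z) powr k + jbracket (x-z) powr k - 2 * jbracket x powr k\<bar>
          \<le> 4 * 3 powr k * norm z powr k"
proof -
  have M: "3 * norm z \<ge> jbracket x + norm w" if "norm w = norm z" for w :: 'a using z that by simp
  have a: "jbracket (x+z) powr k \<le> (3 * norm z) powr k" using k M[of z] by (intro u_le) auto
  have b0: "jbracket (x+(-z)) powr k \<le> (3 * norm z) powr k" using k M[of "-z"] by (intro u_le) auto
  have b: "jbracket (x-z) powr k \<le> (3 * norm z) powr k" using b0 by simp
  have c: "jbracket x powr k \<le> (3 * norm z) powr k" using k z jb_pos[of x] by (intro powr_mono2) auto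
  have "(3 * norm z) powr k = 3 powr k * norm z powr k" by (rule powr_mult)
  moreover have "0 \<le> jbracket y powr k" for y :: 'a by simp
  have nn: "0 \<le> jbracket (x+z) powr k" "0 \<le> jbracket (x-z) powr k" "0 \<le> jbracket x powr k" by simp_all
  ultimately show ?thesis unfolding abs_le_iff using a b c nn by linarith
qed

lemma diff_eps:
  fixes x z :: "'a::euclidean_space" and k eps :: real
  assumes k: "0 < k" and e: "0 < eps" "eps < norm z"
  shows "\<bar>jbracket (x+z) powr k - jbracket x powr k\<bar> \<le> 2 * (jbracket x / eps + 1) powr k * norm z powr k"
proof -
  define L where "L = jbracket x"
  have L0: "L > 0" using jb_pos by (simp add: L_def)
  have "L = (L / eps) * eps" using e by simp
  also have "\<dots> \<le> (L / eps) * norm z" using e L0 by (intro mult_left_mono) auto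
  finally have Lz: "L \<le> (L/eps) * norm z" .
  have M: "(L/eps + 1) * norm z \<ge> L + norm z" using Lz by (simp add: algebra_simps)
  have a: "jbracket (x+z) powr k \<le> ((L/eps + 1) * norm z) powr k" using k M by (intro u_le) (auto simp: L_def)
  have M2: "L \<le> (L/eps + 1) * norm z" using M norm_ge_zero[of z] by linarith
  have c: "L powr k \<le> ((L/eps + 1) * norm z) powr k" using k M2 L0 by (intro powr_mono2) auto
  have "((L/eps + 1) * norm z) powr k = (L/eps + 1) powr k * norm z powr k" by (rule powr_mult)
  moreover have "0 \<le> jbracket y powr k" for y :: 'a by simp
  have nn: "0 \<le> jbracket (x+z) powr k" "0 \<le> L powr k" by simp_all
  ultimately show ?thesis unfolding abs_le_iff L_def[symmetric] using a c nn by linarith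
qed




lemma jb_meas[measurable]: "jbracket \<in> borel_measurable borel"
  unfolding jbracket_def[abs_def] by measurable

lemma int_shift:
  fixes f :: "'a::euclidean_space \<Rightarrow> real"
  assumes [measurable]: "f \<in> borel_measurable borel"
  shows "integral\<^sup>L lborel f = integral\<^sup>L lborel (\<lambda>z. f (x + z))"
proof -
  have "integral\<^sup>L lborel f = integral\<^sup>L (distr lborel borel ((+) x)) f"
    by (simp add: lborel_distr_plus)
  also have "\<dots> = integral\<^sup>L lborel (\<lambda>z. f (x + z))"
    by (rule integral_distr) auto
  finally show ?thesis .
qed

lemma int_refl:
  fixes f :: "'a::euclidean_space \<Rightarrow> real"
  assumes [measurable]: "f \<in> borel_measurable borel"
  shows "integral\<^sup>L lborel f = integral\<^sup>L lborel (\<lambda>z. f (x - z))"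
proof -
  have eq: "lborel = distr lborel borel (\<lambda>z. x + (-1) *\<^sub>R z :: 'a)"
    using lborel_affine[of "-1" x] by (simp add: density_1)
  have "integral\<^sup>L lborel f = integral\<^sup>L (distr lborel borel (\<lambda>z. x + (-1) *\<^sub>R z :: 'a)) f"
    by (subst eq[symmetric]) (rule refl)
  also have "\<dots> = integral\<^sup>L lborel (\<lambda>z. f (x + (-1) *\<^sub>R z))"
    by (rule integral_distr) auto
  finally show ?thesis by simp
qed

lemma far_int:
  fixes q r :: real
  assumes q: "q > real DIM('a)" and r: "r > 0"
  shows "integrable lborel (\<lambda>z::'a::euclidean_space. indicator {z. r < norm z} z * norm z powr (-q))"
    "(\<integral>z. indicator {z::'a. r < norm z} z * norm z powr (-q) \<partial>lborel) \<le> far_const DIM('a) q * r powr (real DIM('a) - q)"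
  using nn_to_int[OF _ _ _ far_nn[OF q r]] far_const_nonneg[OF q] by (auto simp: indicator_def)

lemma near_int:
  fixes q r :: real
  assumes q: "q < real DIM('a)" and r: "r > 0"
  shows "integrable lborel (\<lambda>z::'a::euclidean_space. indicator {z. 0 < norm z \<and> norm z \<le> r} z * norm z powr (-q))"
    "(\<integral>z. indicator {z::'a. 0 < norm z \<and> norm z \<le> r} z * norm z powr (-q) \<partial>lborel) \<le> near_const DIM('a) q * r powr (real DIM('a) - q)"
  using nn_to_int[OF _ _ _ near_nn[OF q r]] near_const_nonneg[OF q] by (auto simp: indicator_def)




lemma main_bound:
  fixes s k :: real and x :: "'a::euclidean_space"
  assumes hs: "0 < s" "s < 1" and hk: "0 < k" "k < 2 * s"
  shows "neg_frac_laplacian s (\<lambda>y. jbracket y powr k) x \<le>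
     frac_const DIM('a) s * ((1/2) * (300 * near_const DIM('a) (real DIM('a) + 2 * s - 2) * 2 powr (2 * s-2)
        + 4 * 3 powr k * far_const DIM('a) (real DIM('a) + 2 * s - k) * 2 powr (2 * s-k))) * jbracket x powr (k - 2 * s)"
proof -
  define p where "p = real DIM('a) + 2 * s"
  define L where "L = jbracket x"
  define u where "u y = jbracket y powr k" for y :: 'a
  define G where "G z = (u (x+z) + u (x-z) - 2 * u x) / norm z powr p" for z :: 'a
  define H where "H z = 300 * L powr (k-2) * (indicator {z::'a. 0 < norm z \<and> norm z \<le> L/2} z * norm z powr (-(p-2)))
     + 4 * 3 powr k * (indicator {z::'a. L/2 < norm z} z * norm z powr (-(p-k)))" for z :: 'a
  have L1: "L \<ge> 1" unfolding L_def by (rule jb_ge1)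
  have uL: "u x = L powr k" by (simp add: u_def L_def)
  have [measurable]: "u \<in> borel_measurable borel" unfolding u_def[abs_def] by measurable
  have Gm[measurable]: "G \<in> borel_measurable borel" unfolding G_def[abs_def] by measurable
  have Hm[measurable]: "H \<in> borel_measurable borel" unfolding H_def[abs_def] by measurable
  have Hnn: "H z \<ge> 0" for z unfolding H_def by (intro add_nonneg_nonneg mult_nonneg_nonneg) auto
  have HG: "\<bar>G z\<bar> \<le> H z" for z
  proof -
    consider "z = 0" | "0 < norm z \<and> norm z \<le> L/2" | "L/2 < norm z" by force
    then show ?thesis
    proof cases
      case 1 then show ?thesis using Hnn[of z] by (simp add: G_def)
    next
      case 2
      then have w: "norm z powr p > 0" by simp
      have D: "\<bar>u (x+z) + u (x-z) - 2 * u x\<bar> \<le> 300 * L powr (k-2) * (norm z)^2"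
        unfolding u_def L_def using D_near[of k z x] hk hs 2 by (simp add: L_def)
      have "\<bar>G z\<bar> = \<bar>u (x+z) + u (x-z) - 2 * u x\<bar> / norm z powr p"
        by (simp add: G_def abs_divide)
      also have "\<dots> \<le> 300 * L powr (k-2) * (norm z)^2 / norm z powr p"
        using D w by (intro divide_right_mono) auto
      also have "300 * L powr (k-2) * (norm z)^2 / norm z powr p = 300 * L powr (k-2) * norm z powr (-(p-2))"
      proof -
        have n2: "(norm z)^2 = norm z powr 2" by (simp add: powr_numeral)
        have "norm z powr 2 / norm z powr p = norm z powr (2 - p)" by (rule powr_diff[symmetric])
        then have "(norm z)^2 / norm z powr p = norm z powr (-(p-2))" unfolding n2 by simp
        then show ?thesis by (metis times_divide_eq_right)
      qed
      finally show ?thesis using 2 by (simp add: H_def)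
    next
      case 3
      then have "norm z > 0" using L1 by linarith
      then have w: "norm z powr p > 0" by simp
      have D: "\<bar>u (x+z) + u (x-z) - 2 * u x\<bar> \<le> 4 * 3 powr k * norm z powr k"
        unfolding u_def using D_far[of k x z] hk 3 by (simp add: L_def)
      have "\<bar>G z\<bar> = \<bar>u (x+z) + u (x-z) - 2 * u x\<bar> / norm z powr p"
        by (simp add: G_def abs_divide)
      also have "\<dots> \<le> 4 * 3 powr k * norm z powr k / norm z powr p"
        using D w by (intro divide_right_mono) auto
      also have "4 * 3 powr k * norm z powr k / norm z powr p = 4 * 3 powr k * norm z powr (-(p-k))"
      proof -
        have "norm z powr k / norm z powr p = norm z powr (k - p)" by (rule powr_diff[symmetric])
        then have "norm z powr k / norm z powr p = norm z powr (-(p-k))" by simp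
        then show ?thesis by (metis times_divide_eq_right)
      qed
      finally show ?thesis using 3 by (simp add: H_def)
    qed
  qed
  have q1: "p - 2 < real DIM('a)" using hs by (simp add: p_def)
  have q2: "real DIM('a) < p - k" using hk by (simp add: p_def)
  have L2: "0 < L/2" using L1 by simp
  define Kn where "Kn = near_const DIM('a) (p-2)"
  define Kf where "Kf = far_const DIM('a) (p-k)"
  define g1 where "g1 z = indicator {z::'a. 0 < norm z \<and> norm z \<le> L/2} z * norm z powr (-(p-2))" for z
  define g2 where "g2 e z = indicator {z::'a. e < norm z} z * norm z powr (-(p-k))" for e z
  have NI: "integrable lborel g1" "integral\<^sup>L lborel g1 \<le> Kn * (L/2) powr (2 - 2 * s)"
    using near_int[OF q1 L2] by (simp_all add: g1_def[abs_def] Kn_def p_def)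
  have FI: "integrable lborel (g2 e)" "integral\<^sup>L lborel (g2 e) \<le> Kf * e powr (k - 2 * s)" if "e > 0" for e
    using far_int[OF q2 that] by (simp_all add: g2_def[abs_def] Kf_def p_def)
  have Heq: "H = (\<lambda>z. 300 * L powr (k-2) * g1 z + 4 * 3 powr k * g2 (L/2) z)"
    by (simp add: H_def[abs_def] g1_def g2_def)
  have Hint: "integrable lborel H" unfolding Heq using NI(1) FI(1)[OF L2] by simp
  have intH: "integral\<^sup>L lborel H = 300 * L powr (k-2) * integral\<^sup>L lborel g1 + 4 * 3 powr k * integral\<^sup>L lborel (g2 (L/2))"
    unfolding Heq using NI(1) FI(1)[OF L2] by simp
  have HB: "integral\<^sup>L lborel H \<le> 300 * L powr (k-2) * (Kn * (L/2) powr (2 - 2 * s)) + 4 * 3 powr k * (Kf * (L/2) powr (k - 2 * s))"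
    unfolding intH using NI(2) FI(2)[OF L2] by (intro add_mono mult_left_mono) auto
  define Fp where "Fp e z = indicator {z::'a. e < norm z} z * ((u (x+z) - u x) / norm z powr p)" for e z
  define Fm where "Fm e z = indicator {z::'a. e < norm z} z * ((u (x-z) - u x) / norm z powr p)" for e z
  have Fpm[measurable]: "Fp e \<in> borel_measurable borel" for e
  proof -
    have "(\<lambda>z. indicator {z::'a. e < norm z} z * ((u (x+z) - u x) / norm z powr p)) \<in> borel_measurable borel"
      by measurable
    then show ?thesis by (simp add: Fp_def[abs_def])
  qed
  have Fmm[measurable]: "Fm e \<in> borel_measurable borel" for e
  proof -
    have "(\<lambda>z. indicator {z::'a. e < norm z} z * ((u (x-z) - u x) / norm z powr p)) \<in> borel_measurable borel"
      by measurable
    then show ?thesis by (simp add: Fm_def[abs_def])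
  qed
  have Fbound: "\<bar>indicator {z::'a. e < norm z} z * ((u (x+w) - u x) / norm z powr p)\<bar> \<le> 2 * (L/e+1) powr k * g2 e z"
    if e: "e > 0" and w: "norm w = norm z" for e z w
  proof (cases "e < norm z")
    case True
    then have z0: "norm z > 0" using e by linarith
    have "\<bar>u (x+w) - u x\<bar> \<le> 2 * (L/e+1) powr k * norm z powr k"
      using diff_eps[of k e w x] hk(1) e True w unfolding u_def L_def by simp
    then have "\<bar>u (x+w) - u x\<bar> / norm z powr p \<le> 2 * (L/e+1) powr k * norm z powr k / norm z powr p"
      using z0 by (intro divide_right_mono) auto
    also have "2 * (L/e+1) powr k * norm z powr k / norm z powr p = 2 * (L/e+1) powr k * norm z powr (-(p-k))"
    proof -
      have "norm z powr k / norm z powr p = norm z powr (k - p)" by (rule powr_diff[symmetric])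
      then have "norm z powr k / norm z powr p = norm z powr (-(p-k))" by simp
      then show ?thesis by (metis times_divide_eq_right)
    qed
    finally have "\<bar>u (x+w) - u x\<bar> / norm z powr p \<le> 2 * (L/e+1) powr k * norm z powr (-(p-k))" .
    then have "\<bar>u (x+w) - u x\<bar> / norm z powr p \<le> 2 * (L/e+1) powr k * g2 e z"
      using True by (simp add: g2_def)
    then show ?thesis using True by (simp add: abs_divide)
  next
    case False
    then show ?thesis using e by (simp add: g2_def)
  qed
  have Fint: "integrable lborel (Fp e)" "integrable lborel (Fm e)" if e: "e > 0" for e
  proof -
    have gi: "integrable lborel (\<lambda>z. 2 * (L/e+1) powr k * g2 e z)" using FI(1)[OF e] by simp
    show "integrable lborel (Fp e)"
    proof (rule Bochner_Integration.integrable_bound[OF gi])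
      show "AE z in lborel. norm (Fp e z) \<le> norm (2 * (L/e+1) powr k * g2 e z)"
      proof (rule AE_I2)
        fix z :: 'a
        have "norm (Fp e z) \<le> 2 * (L/e+1) powr k * g2 e z"
          using Fbound[OF e, of z z] by (simp add: Fp_def)
        also have "\<dots> \<le> norm (2 * (L/e+1) powr k * g2 e z)" by simp
        finally show "norm (Fp e z) \<le> norm (2 * (L/e+1) powr k * g2 e z)" .
      qed
    qed simp
    show "integrable lborel (Fm e)"
    proof (rule Bochner_Integration.integrable_bound[OF gi])
      show "AE z in lborel. norm (Fm e z) \<le> norm (2 * (L/e+1) powr k * g2 e z)"
      proof (rule AE_I2)
        fix z :: 'a
        have "norm (Fm e z) \<le> 2 * (L/e+1) powr k * g2 e z"
          using Fbound[OF e, of "-z" z] by (simp add: Fm_def)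
        also have "\<dots> \<le> norm (2 * (L/e+1) powr k * g2 e z)" by simp
        finally show "norm (Fm e z) \<le> norm (2 * (L/e+1) powr k * g2 e z)" .
      qed
    qed simp
  qed
  have Gsplit: "Fp e z + Fm e z = indicator {z::'a. e < norm z} z * G z" for e z
  proof -
    have eq: "u (x+z) + u (x-z) - 2 * u x = (u (x+z) - u x) + (u (x-z) - u x)" by simp
    have "G z = (u (x+z) - u x) / norm z powr p + (u (x-z) - u x) / norm z powr p"
      unfolding G_def eq by (rule add_divide_distrib)
    then show ?thesis unfolding Fp_def Fm_def by (simp add: distrib_left)
  qed
  have Teq: "frac_trunc s (\<lambda>y. jbracket y powr k) x e = (1/2) * integral\<^sup>L lborel (\<lambda>z. indicator {z::'a. e < norm z} z * G z)"
    if e: "e > 0" for e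
  proof -
    define f where "f y = indicator {y::'a. e < dist x y} y * ((u y - u x) / dist x y powr p)" for y
    have fm[measurable]: "f \<in> borel_measurable borel" unfolding f_def[abs_def] by measurable
    have f0: "frac_trunc s (\<lambda>y. jbracket y powr k) x e = integral\<^sup>L lborel f"
      unfolding frac_trunc_def set_lebesgue_integral_def f_def p_def u_def by simp
    have f1: "integral\<^sup>L lborel f = integral\<^sup>L lborel (Fp e)"
    proof -
      have "integral\<^sup>L lborel f = integral\<^sup>L lborel (\<lambda>z. f (x + z))" by (rule int_shift[OF fm])
      also have "(\<lambda>z. f (x + z)) = Fp e"
        by (rule ext) (simp add: f_def Fp_def dist_norm indicator_def)
      finally show ?thesis .
    qed
    have f2: "integral\<^sup>L lborel f = integral\<^sup>L lborel (Fm e)"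
    proof -
      have "integral\<^sup>L lborel f = integral\<^sup>L lborel (\<lambda>z. f (x - z))" by (rule int_refl[OF fm])
      also have "(\<lambda>z. f (x - z)) = Fm e"
        by (rule ext) (simp add: f_def Fm_def dist_norm indicator_def)
      finally show ?thesis .
    qed
    have "integral\<^sup>L lborel (\<lambda>z. indicator {z::'a. e < norm z} z * G z) = integral\<^sup>L lborel (\<lambda>z. Fp e z + Fm e z)"
      by (simp add: Gsplit)
    also have "\<dots> = integral\<^sup>L lborel (Fp e) + integral\<^sup>L lborel (Fm e)"
      by (rule Bochner_Integration.integral_add[OF Fint[OF e]])
    finally show ?thesis using f0 f1 f2 by simp
  qed
  have Gint: "integrable lborel G"
    by (rule Bochner_Integration.integrable_bound[OF Hint]) (auto intro!: AE_I2 order_trans[OF HG] simp: Hnn)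
  have lim: "((\<lambda>e. frac_trunc s (\<lambda>y. jbracket y powr k) x e) \<longlongrightarrow> (1/2) * integral\<^sup>L lborel G) (at_right 0)"
  proof (rule tendsto_at_right_sequentially[of 0 1])
    fix S :: "nat \<Rightarrow> real"
    assume S: "\<And>n. 0 < S n" "\<And>n. S n < 1" "decseq S" "S \<longlonglongrightarrow> 0"
    have "(\<lambda>n. integral\<^sup>L lborel (\<lambda>z. indicator {z::'a. S n < norm z} z * G z)) \<longlonglongrightarrow> integral\<^sup>L lborel G"
    proof (rule integral_dominated_convergence[where w=H])
      show "AE z in lborel. (\<lambda>n. indicator {z::'a. S n < norm z} z * G z) \<longlonglongrightarrow> G z"
      proof (rule AE_I2)
        fix z :: 'a
        show "(\<lambda>n. indicator {z::'a. S n < norm z} z * G z) \<longlonglongrightarrow> G z"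
        proof (cases "z = 0")
          case True
          have "G z = 0" using True by (simp add: G_def)
          moreover have "indicator {z::'a. S n < norm z} z = (0::real)" for n using True S(1)[of n] by simp
          ultimately show ?thesis by simp
        next
          case False
          then have nz: "norm z > 0" by simp
          have "eventually (\<lambda>n. S n < norm z) sequentially" by (rule order_tendstoD(2)[OF S(4) nz])
          then have "eventually (\<lambda>n. indicator {z::'a. S n < norm z} z * G z = G z) sequentially"
            by eventually_elim simp
          then show ?thesis by (rule tendsto_eventually)
        qed
      qed
      show "AE z in lborel. norm (indicator {z::'a. S n < norm z} z * G z) \<le> H z" for n
      proof (rule AE_I2)
        fix z :: 'a
        show "norm (indicator {z::'a. S n < norm z} z * G z) \<le> H z"
          using HG[of z] Hnn[of z] by (cases "S n < norm z") auto
      qed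
    qed (auto simp: Hint)
    then have "(\<lambda>n. (1/2) * integral\<^sup>L lborel (\<lambda>z. indicator {z::'a. S n < norm z} z * G z)) \<longlonglongrightarrow> (1/2) * integral\<^sup>L lborel G"
      by (rule tendsto_mult_left)
    moreover have "(\<lambda>n. frac_trunc s (\<lambda>y. jbracket y powr k) x (S n)) = (\<lambda>n. (1/2) * integral\<^sup>L lborel (\<lambda>z. indicator {z::'a. S n < norm z} z * G z))"
      by (rule ext) (rule Teq[OF S(1)])
    ultimately show "(\<lambda>n. frac_trunc s (\<lambda>y. jbracket y powr k) x (S n)) \<longlonglongrightarrow> (1/2) * integral\<^sup>L lborel G"
      by simp
  qed simp
  have Lim: "Lim (at_right 0) (frac_trunc s (\<lambda>y. jbracket y powr k) x) = (1/2) * integral\<^sup>L lborel G"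
    by (rule tendsto_Lim) (use lim in auto)
  have fc: "frac_const DIM('a) s \<ge> 0" unfolding frac_const_def
    using hs by (intro divide_nonneg_nonneg mult_nonneg_nonneg less_imp_le[OF Gamma_real_pos]) auto
  have GH: "integral\<^sup>L lborel G \<le> integral\<^sup>L lborel H"
    by (rule integral_mono'[OF Hint]) (use HG Hnn in \<open>auto simp: abs_le_iff\<close>)
  have pd: "(L/2) powr e = 2 powr (-e) * L powr e" for e
  proof -
    have a: "(L/2) powr e = L powr e * inverse (2 powr e)" unfolding powr_divide by (rule divide_inverse)
    have b: "inverse (2 powr e) = (2::real) powr (-e)" by (rule powr_minus[symmetric])
    show ?thesis unfolding a b by (rule mult.commute)
  qed
  have pw1: "L powr (k-2) * (L/2) powr (2 - 2 * s) = 2 powr (2 * s - 2) * L powr (k - 2 * s)"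
  proof -
    have f: "L powr (k-2) * L powr (2 - 2 * s) = L powr (k - 2 * s)" by (simp add: powr_add[symmetric])
    have m: "-(2 - 2 * s) = 2 * s - 2" by simp
    have "L powr (k-2) * (2 powr (2 * s - 2) * L powr (2 - 2 * s)) = 2 powr (2 * s - 2) * (L powr (k-2) * L powr (2 - 2 * s))"
      by (rule mult.left_commute)
    then show ?thesis unfolding pd m f .
  qed
  have pw2: "(L/2) powr (k - 2 * s) = 2 powr (2 * s - k) * L powr (k - 2 * s)"
  proof -
    have m: "-(k - 2 * s) = 2 * s - k" by simp
    show ?thesis unfolding pd m ..
  qed
  have HB2: "integral\<^sup>L lborel H \<le> (300 * Kn * 2 powr (2 * s - 2) + 4 * 3 powr k * Kf * 2 powr (2 * s - k)) * L powr (k - 2 * s)"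
  proof -
    have "300 * L powr (k-2) * (Kn * (L/2) powr (2 - 2 * s)) + 4 * 3 powr k * (Kf * (L/2) powr (k - 2 * s))
        = 300 * Kn * (L powr (k-2) * (L/2) powr (2 - 2 * s)) + 4 * 3 powr k * Kf * (L/2) powr (k - 2 * s)"
      by (simp only: mult_ac)
    also have "\<dots> = (300 * Kn * 2 powr (2 * s - 2) + 4 * 3 powr k * Kf * 2 powr (2 * s - k)) * L powr (k - 2 * s)"
      unfolding pw1 pw2 by (simp only: distrib_right mult.assoc)
    finally show ?thesis using HB by simp
  qed
  have "neg_frac_laplacian s (\<lambda>y. jbracket y powr k) x = frac_const DIM('a) s * ((1/2) * integral\<^sup>L lborel G)"
    unfolding neg_frac_laplacian_def Lim ..
  also have "\<dots> \<le> frac_const DIM('a) s * ((1/2) * ((300 * Kn * 2 powr (2 * s - 2) + 4 * 3 powr k * Kf * 2 powr (2 * s - k)) * L powr (k - 2 * s)))"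
    using GH HB2 fc by (intro mult_left_mono) auto
  finally show ?thesis unfolding Kn_def Kf_def p_def L_def by (simp only: mult.assoc)
qed


theorem proposition3p3:
  fixes s k :: real
  assumes "0 < s" and "s < 1" and "0 < k" and "k < 2 * s"
  shows "\<exists>C>0. \<forall>x::'a::euclidean_space.
           neg_frac_laplacian s (\<lambda>y. jbracket y powr k) x
             \<le> C * jbracket x powr (k - 2 * s) * (1 + 1 / (2 * s) + 1 / (2 * s - k))"
proof -
  define C0 where "C0 = frac_const DIM('a) s * ((1/2) * (300 * near_const DIM('a) (real DIM('a) + 2 * s - 2) * 2 powr (2 * s - 2)
        + 4 * 3 powr k * far_const DIM('a) (real DIM('a) + 2 * s - k) * 2 powr (2 * s - k)))"
  define F where "F = 1 + 1 / (2 * s) + 1 / (2 * s - k)"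
  have F1: "F \<ge> 1" unfolding F_def using assms by (simp add: add_nonneg_nonneg)
  show ?thesis
  proof (intro exI[of _ "\<bar>C0\<bar> + 1"] conjI allI)
    show "\<bar>C0\<bar> + 1 > 0" by simp
    fix x :: 'a
    define J where "J = jbracket x powr (k - 2 * s)"
    have J0: "J > 0" unfolding J_def using jb_pos[of x] by simp
    have "neg_frac_laplacian s (\<lambda>y. jbracket y powr k) x \<le> C0 * J"
      unfolding C0_def J_def by (rule main_bound[OF assms])
    also have "C0 * J \<le> (\<bar>C0\<bar> + 1) * J" using J0 by (intro mult_right_mono) auto
    also have "\<dots> = (\<bar>C0\<bar> + 1) * J * 1" by simp
    also have "\<dots> \<le> (\<bar>C0\<bar> + 1) * J * F" using J0 F1 by (intro mult_left_mono) auto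
    finally show "neg_frac_laplacian s (\<lambda>y. jbracket y powr k) x
             \<le> (\<bar>C0\<bar> + 1) * jbracket x powr (k - 2 * s) * (1 + 1 / (2 * s) + 1 / (2 * s - k))"
      unfolding J_def F_def .
  qed
qed


end
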